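(* For every integer $m\geq 3$, the complete sun $KS_m$ satisfies $\eta(KS_m)=\lceil (m+2)/3\rceil$.
   Context: All graphs are finite, simple and undirected. Indices are taken modulo $m$, so $u_0=u_m$ and $v_0=v_m$. The complete sun $KS_m$ has vertices $u_1,\dots,u_m,v_1,\dots,v_m$, where $\{u_1,\dots,u_m\}$ is a clique, and additional edges $(u_i,v_{i-1}),(u_i,v_i)$ for all $i\in[m]$ (so each $v_i$ is adjacent exactly to $u_i$ and $u_{i+1}$). For a vertex $v$, $N(v)$ is its set of neighbours. For a positive integer $k$, $[k]=\{1,\dots,k\}$. For a labeling $f:V(G)\to[k]$ and $S\subseteq V(G)$, $f(S)=\sum_{u\in S}f(u)$. A labeling $f:V(G)\to[k]$ is an additive $k$-coloring if $f(N(u))\neq f(N(v))$ for every edge $(u,v)$ of $G$. The additive chromatic number $\eta(G)$ is the least $k$ for which $G$ has an additive $k$-coloring. *)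

theory Defs
  imports Complex_Main
begin

text \<open>A finite simple graph is given by a vertex set VV and a symmetric irreflexive
adjacency relation E (only its restriction to VV matters).\<close>

definition nbhd :: "'a set \<Rightarrow> ('a \<Rightarrow> 'a \<Rightarrow> bool) \<Rightarrow> 'a \<Rightarrow> 'a set" where
  "nbhd VV E v = {u \<in> VV. E v u}"

definition additive_coloring ::
  "'a set \<Rightarrow> ('a \<Rightarrow> 'a \<Rightarrow> bool) \<Rightarrow> nat \<Rightarrow> ('a \<Rightarrow> nat) \<Rightarrow> bool" where
  "additive_coloring VV E k f \<longleftrightarrow>
     (\<forall>v\<in>VV. f v \<in> {1..k}) \<and>
     (\<forall>u\<in>VV. \<forall>v\<in>VV. E u v \<longrightarrow> sum f (nbhd VV E u) \<noteq> sum f (nbhd VV E v))"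

definition additive_chromatic_number :: "'a set \<Rightarrow> ('a \<Rightarrow> 'a \<Rightarrow> bool) \<Rightarrow> nat" where
  "additive_chromatic_number VV E = (LEAST k. k \<ge> 1 \<and> (\<exists>f. additive_coloring VV E k f))"

datatype ksv = U nat | V nat

definition ks_verts :: "nat \<Rightarrow> ksv set" where
  "ks_verts m = U ` {1..m} \<union> V ` {1..m}"

definition nxt :: "nat \<Rightarrow> nat \<Rightarrow> nat" where
  "nxt m i = (if i = m then 1 else i + 1)"

fun ks_adj :: "nat \<Rightarrow> ksv \<Rightarrow> ksv \<Rightarrow> bool" where
  "ks_adj m (U i) (U j) = (i \<noteq> j)"
| "ks_adj m (U i) (V j) = (i = j \<or> i = nxt m j)"
| "ks_adj m (V j) (U i) = (i = j \<or> i = nxt m j)"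
| "ks_adj m (V i) (V j) = False"

end

theory Submission
  imports Defs
begin

definition prv :: "nat \<Rightarrow> nat \<Rightarrow> nat" where
  "prv m i = (if i = 1 then m else i - 1)"

lemma nbhd_U:
  assumes "m \<ge> 2" "i \<in> {1..m}"
  shows "nbhd (ks_verts m) (ks_adj m) (U i) = U ` ({1..m} - {i}) \<union> {V i, V (prv m i)}"
proof (rule set_eqI)
  fix x show "x \<in> nbhd (ks_verts m) (ks_adj m) (U i) \<longleftrightarrow> x \<in> U ` ({1..m} - {i}) \<union> {V i, V (prv m i)}"
    using assms by (cases x) (force simp: nbhd_def ks_verts_def prv_def nxt_def split: if_splits)+
qed

lemma nbhd_V:
  assumes "m \<ge> 2" "j \<in> {1..m}"
  shows "nbhd (ks_verts m) (ks_adj m) (V j) = {U j, U (nxt m j)}"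
proof (rule set_eqI)
  fix x show "x \<in> nbhd (ks_verts m) (ks_adj m) (V j) \<longleftrightarrow> x \<in> {U j, U (nxt m j)}"
    using assms by (cases x) (auto simp: nbhd_def ks_verts_def nxt_def split: if_splits)
qed

lemma sum_U:
  assumes "m \<ge> 2" "i \<in> {1..m}"
  shows "sum f (nbhd (ks_verts m) (ks_adj m) (U i)) =
     (\<Sum>j\<in>{1..m}-{i}. f (U j)) + f (V i) + f (V (prv m i))"
proof -
  have d: "prv m i \<noteq> i" using assms by (auto simp: prv_def)
  have "sum f (U ` ({1..m} - {i}) \<union> {V i, V (prv m i)}) =
      sum f (U ` ({1..m} - {i})) + sum f {V i, V (prv m i)}"
    by (rule sum.union_disjoint) auto
  also have "sum f (U ` ({1..m} - {i})) = (\<Sum>j\<in>{1..m}-{i}. f (U j))"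
    by (subst sum.reindex) (auto simp: inj_on_def)
  also have "sum f {V i, V (prv m i)} = f (V i) + f (V (prv m i))" using d by simp
  finally show ?thesis using nbhd_U[OF assms] by (simp add: add_ac)
qed

lemma sum_V:
  assumes "m \<ge> 2" "j \<in> {1..m}"
  shows "sum f (nbhd (ks_verts m) (ks_adj m) (V j)) = f (U j) + f (U (nxt m j))"
proof -
  have "nxt m j \<noteq> j" using assms by (auto simp: nxt_def)
  then show ?thesis using nbhd_V[OF assms] by simp
qed

lemma prv_range: "m \<ge> 2 \<Longrightarrow> i \<in> {1..m} \<Longrightarrow> prv m i \<in> {1..m}"
  by (auto simp: prv_def)

lemma nxt_range: "m \<ge> 2 \<Longrightarrow> i \<in> {1..m} \<Longrightarrow> nxt m i \<in> {1..m}"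
  by (auto simp: nxt_def)

lemma lower:
  assumes m: "m \<ge> 2" and ac: "additive_coloring (ks_verts m) (ks_adj m) k f"
  shows "m + 2 \<le> 3 * k"
proof -
  define S where "S = (\<Sum>j\<in>{1..m}. f (U j))"
  define s where "s i = sum f (nbhd (ks_verts m) (ks_adj m) (U i))" for i
  have rng: "f v \<in> {1..k}" if "v \<in> ks_verts m" for v using ac that by (auto simp: additive_coloring_def)
  have sv: "s i + f (U i) = S + f (V i) + f (V (prv m i))" if "i \<in> {1..m}" for i
  proof -
    have "S = f (U i) + (\<Sum>j\<in>{1..m}-{i}. f (U j))"
      unfolding S_def using that by (subst sum.remove[of _ i]) auto
    then show ?thesis using sum_U[OF m that, of f] unfolding s_def by simp
  qed
  have inj: "inj_on (\<lambda>i. s i + k) {1..m}"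
  proof (rule inj_onI)
    fix i j assume ij: "i \<in> {1..m}" "j \<in> {1..m}" "s i + k = s j + k"
    show "i = j"
    proof (rule ccontr)
      assume "i \<noteq> j"
      then have "ks_adj m (U i) (U j)" by simp
      moreover have "U i \<in> ks_verts m" "U j \<in> ks_verts m" using ij by (auto simp: ks_verts_def)
      ultimately have "s i \<noteq> s j" using ac unfolding additive_coloring_def s_def by blast
      then show False using ij by simp
    qed
  qed
  have sub: "(\<lambda>i. s i + k) ` {1..m} \<subseteq> {S+2..S+3*k-1}"
  proof
    fix x assume "x \<in> (\<lambda>i. s i + k) ` {1..m}"
    then obtain i where i: "i \<in> {1..m}" and x: "x = s i + k" by auto
    have "f (U i) \<in> {1..k}" "f (V i) \<in> {1..k}" "f (V (prv m i)) \<in> {1..k}"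
      using rng i prv_range[OF m i] by (auto simp: ks_verts_def)
    then show "x \<in> {S+2..S+3*k-1}" using sv[OF i] x by auto
  qed
  have "m = card ((\<lambda>i. s i + k) ` {1..m})" using card_image[OF inj] by simp
  also have "\<dots> \<le> card {S+2..S+3*k-1}" by (rule card_mono[OF _ sub]) auto
  finally show ?thesis using m by simp
qed

lemma upper:
  assumes m3: "m \<ge> 3" and k2: "k \<ge> 2" and h1: "m + 2 \<le> 3 * k" and h2: "3 * k \<le> m + 4"
  shows "\<exists>f. additive_coloring (ks_verts m) (ks_adj m) k f"
proof -
  have m: "m \<ge> 2" using m3 by simp
  define L where "L = m + 2 - 2 * k"
  have L1: "L \<ge> 1" and Lk: "L \<le> k" and mL: "m = L + 2 * k - 2" and km: "k < m"
    using m3 k2 h1 h2 unfolding L_def by arith+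
  define fa where "fa i = (if i = 1 then k else if i \<le> L then k + 2 - i else 1)" for i
  define fb where "fb i = (if i \<le> L then 1 else (i - L + 1) div 2 + 1)" for i
  define f where "f x = (case x of U i \<Rightarrow> fa i | V i \<Rightarrow> fb i)" for x
  have fa_r: "fa i \<in> {1..k}" if "i \<in> {1..m}" for i
    using that Lk k2 unfolding fa_def by auto
  have fb_r: "fb i \<in> {1..k}" if "i \<in> {1..m}" for i
  proof (cases "i \<le> L")
    case True then show ?thesis using k2 unfolding fb_def by auto
  next
    case False
    have "(i - L + 1) div 2 \<le> (2 * k - 1) div 2" using that mL False by (intro div_le_mono) auto
    also have "\<dots> = k - 1" using k2 by presburger
    finally show ?thesis using False k2 unfolding fb_def by auto
  qed
  define S where "S = (\<Sum>j\<in>{1..m}. fa j)"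
  define s where "s i = sum f (nbhd (ks_verts m) (ks_adj m) (U i))" for i
  have s_eq: "s i = (\<Sum>j\<in>{1..m}-{i}. fa j) + fb i + fb (prv m i)" if "i \<in> {1..m}" for i
    using sum_U[OF m that, of f] unfolding s_def f_def by simp
  have sv: "int (s i) = int S + c" if "i \<in> {1..m}"
     "c = (if i = 1 then 1 else if i \<le> L then int i - int k else int i - int L + 1)" for i c
  proof -
    have "S = fa i + (\<Sum>j\<in>{1..m}-{i}. fa j)"
      unfolding S_def using that by (subst sum.remove[of _ i]) auto
    then have e: "int (s i) = int S - int (fa i) + int (fb i) + int (fb (prv m i))"
      using s_eq[OF that(1)] by simp
    show ?thesis
    proof (cases "i = 1")
      case True
      have "fb m = k" using mL L1 k2 unfolding fb_def by (simp, presburger)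
      moreover have "fb 1 = 1" using L1 unfolding fb_def by simp
      moreover have "fa 1 = k" unfolding fa_def by simp
      moreover have "prv m 1 = m" unfolding prv_def by simp
      moreover have "c = 1" using that True by simp
      ultimately show ?thesis using e True by simp
    next
      case n1: False
      show ?thesis
      proof (cases "i \<le> L")
        case True then show ?thesis using e n1 that Lk unfolding fa_def fb_def prv_def by auto
      next
        case False
        show ?thesis
        proof (cases "i = L + 1")
          case True then show ?thesis using e n1 that L1 unfolding fa_def fb_def prv_def by auto
        next
          case False
          define n where "n = i - L - 2"
          have n: "i = L + 2 + n" using False \<open>\<not> i \<le> L\<close> unfolding n_def by simp
          have "fb i + fb (i - 1) = n + 4"
            unfolding fb_def n by simp
          moreover have "prv m i = i - 1" using n1 unfolding prv_def by simp
          moreover have "fa i = 1" using n1 \<open>\<not> i \<le> L\<close> unfolding fa_def by simp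
          moreover have "c = int i - int L + 1" using that n1 \<open>\<not> i \<le> L\<close> by simp
          ultimately have "int (s i) = int S - 1 + int (n + 4)" "c = int n + 3" using e n by simp_all
          then show ?thesis by simp
        qed
      qed
    qed
  qed
  have big: "s i \<ge> m + k" if i: "i \<in> {1..m}" for i
  proof -
    have cnt: "(\<Sum>j\<in>A. fa j) \<ge> card A" if "A \<subseteq> {1..m}" for A
    proof -
      have "(\<Sum>j\<in>A. (1::nat)) \<le> (\<Sum>j\<in>A. fa j)"
        using fa_r that by (intro sum_mono) auto
      then show ?thesis by simp
    qed
    show ?thesis
    proof (cases "i = 1")
      case True
      have "card ({1..m} - {i}) = m - 1" using i by simp
      then have "(\<Sum>j\<in>{1..m}-{i}. fa j) \<ge> m - 1" using cnt[of "{1..m}-{i}"] by auto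
      moreover have "fb m = k" using mL L1 k2 unfolding fb_def by (simp, presburger)
      moreover have "fb 1 = 1" using L1 unfolding fb_def by simp
      ultimately show ?thesis using s_eq[OF i] True m unfolding prv_def by simp
    next
      case False
      have "(\<Sum>j\<in>{1..m}-{i}. fa j) = fa 1 + (\<Sum>j\<in>{1..m}-{i}-{1}. fa j)"
        using False i by (subst sum.remove[of _ 1]) auto
      moreover have "card ({1..m} - {i} - {1}) = m - 2" using i False by (simp add: card_Diff_subset)
      moreover have "(\<Sum>j\<in>{1..m}-{i}-{1}. fa j) \<ge> card ({1..m} - {i} - {1})"
        by (rule cnt) auto
      moreover have "fb i \<ge> 1" "fb (prv m i) \<ge> 1"
        using fb_r[OF i] fb_r[OF prv_range[OF m i]] by auto
      ultimately show ?thesis using s_eq[OF i] m unfolding fa_def by simp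
    qed
  qed
  have ac: "additive_coloring (ks_verts m) (ks_adj m) k f"
    unfolding additive_coloring_def
  proof (intro conjI ballI impI)
    fix v assume "v \<in> ks_verts m"
    then show "f v \<in> {1..k}" using fa_r fb_r unfolding ks_verts_def f_def by auto
  next
    fix u v assume uv: "u \<in> ks_verts m" "v \<in> ks_verts m" "ks_adj m u v"
    have VU: "s i \<noteq> sum f (nbhd (ks_verts m) (ks_adj m) (V j))" if "i \<in> {1..m}" "j \<in> {1..m}" for i j
    proof -
      have "sum f (nbhd (ks_verts m) (ks_adj m) (V j)) = fa j + fa (nxt m j)"
        using sum_V[OF m that(2), of f] unfolding f_def by simp
      also have "\<dots> \<le> 2 * k" using fa_r[OF that(2)] fa_r[OF nxt_range[OF m that(2)]] by auto
      finally show ?thesis using big[OF that(1)] km by linarith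
    qed
    show "sum f (nbhd (ks_verts m) (ks_adj m) u) \<noteq> sum f (nbhd (ks_verts m) (ks_adj m) v)"
    proof (cases u; cases v)
      fix i j assume [simp]: "u = U i" "v = U j"
      have ij: "i \<in> {1..m}" "j \<in> {1..m}" "i \<noteq> j" using uv by (auto simp: ks_verts_def)
      have "int (s i) \<noteq> int (s j)"
        using sv[OF ij(1) refl] sv[OF ij(2) refl] ij Lk L1 by (auto split: if_splits)
      then have "s i \<noteq> s j" by simp
      then show ?thesis unfolding s_def by simp
    next
      fix i j assume [simp]: "u = U i" "v = V j"
      have ij: "i \<in> {1..m}" "j \<in> {1..m}" using uv by (auto simp: ks_verts_def)
      show ?thesis using VU[OF ij] unfolding s_def by simp
    next
      fix i j assume [simp]: "u = V i" "v = U j"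
      have ij: "i \<in> {1..m}" "j \<in> {1..m}" using uv by (auto simp: ks_verts_def)
      show ?thesis using VU[OF ij(2,1)] unfolding s_def by simp
    next
      fix i j assume "u = V i" "v = V j"
      then show ?thesis using uv by simp
    qed
  qed
  then show ?thesis by blast
qed

theorem mainTheorem14:
  fixes m :: nat
  assumes "m \<ge> 3"
  shows "additive_chromatic_number (ks_verts m) (ks_adj m) = nat \<lceil>real (m + 2) / 3\<rceil>"
proof -
  define k where "k = nat \<lceil>real (m + 2) / 3\<rceil>"
  have c1: "real (m + 2) / 3 \<le> of_int \<lceil>real (m + 2) / 3\<rceil>" by (rule le_of_int_ceiling)
  have c2: "of_int \<lceil>real (m + 2) / 3\<rceil> < real (m + 2) / 3 + 1" using ceiling_correct[of "real (m + 2) / 3"] by linarith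
  have pos: "\<lceil>real (m + 2) / 3\<rceil> \<ge> 0" using c1
    by (metis ceiling_mono ceiling_zero divide_nonneg_nonneg of_nat_0_le_iff zero_le_numeral)
  have rk: "real k = of_int \<lceil>real (m + 2) / 3\<rceil>" unfolding k_def using pos by simp
  have "real (m + 2) / 3 \<le> real k" using c1 rk by simp
  then have "3 * real k \<ge> real (m + 2)" by (simp add: field_simps)
  then have h1: "m + 2 \<le> 3 * k" by linarith
  have "real k < real (m + 2) / 3 + 1" using c2 rk by simp
  then have "3 * real k < real (m + 2) + 3" by (simp add: field_simps)
  then have h2: "3 * k \<le> m + 4" by linarith
  have k2: "k \<ge> 2" using h1 assms by linarith
  have ex: "\<exists>f. additive_coloring (ks_verts m) (ks_adj m) k f" by (rule upper[OF assms k2 h1 h2])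
  have "additive_chromatic_number (ks_verts m) (ks_adj m) = k"
    unfolding additive_chromatic_number_def
  proof (rule Least_equality)
    show "1 \<le> k \<and> (\<exists>f. additive_coloring (ks_verts m) (ks_adj m) k f)" using k2 ex by simp
  next
    fix y assume "1 \<le> y \<and> (\<exists>f. additive_coloring (ks_verts m) (ks_adj m) y f)"
    then obtain f where "additive_coloring (ks_verts m) (ks_adj m) y f" by blast
    from lower[OF _ this] assms have "m + 2 \<le> 3 * y" by simp
    then show "k \<le> y" using h2 by linarith
  qed
  then show ?thesis unfolding k_def .
qed

end
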